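(* Let $R$ be a discrete valuation ring and let $G$ be a group acting on $R$ by ring automorphisms. Then the invariant ring $R^G=\{r\in R:\ g(r)=r\text{ for all } g\in G\}$ is either a field or a discrete valuation ring; in particular, $R^G$ is noetherian. *)

theory Defs
  imports "HOL-Algebra.Algebra"
begin

definition DVR :: "('a, 'b) ring_scheme \<Rightarrow> bool" where
  "DVR R \<longleftrightarrow> principal_domain R \<and> (\<exists>!P. primeideal P R \<and> P \<noteq> {\<zero>\<^bsub>R\<^esub>})"

definition invariant_ring ::
  "('g, 'c) monoid_scheme \<Rightarrow> ('a, 'b) ring_scheme \<Rightarrow> ('g \<Rightarrow> 'a \<Rightarrow> 'a) \<Rightarrow> ('a, 'b) ring_scheme" where
  "invariant_ring G R \<phi> =
     R\<lparr>carrier := {r \<in> carrier R. \<forall>g \<in> carrier G. \<phi> g r = r}\<rparr>"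

end

theory Submission
  imports Defs
begin

context principal_domain
begin

lemma nonunit_in_P:
  assumes P: "primeideal P R" and uniq: "\<And>Q. primeideal Q R \<Longrightarrow> Q \<noteq> {\<zero>} \<Longrightarrow> Q = P"
  and a: "a \<in> carrier R" "a \<notin> Units R"
  shows "a \<in> P"
proof (cases "a = \<zero>")
  case True thus ?thesis using P by (simp add: additive_subgroup.zero_closed ideal.axioms(1) primeideal.axioms(1))
next
  case False
  then obtain b where b: "b \<in> carrier R" "ring_irreducible b" "b divides a"
    using exists_irreducible_divisor[of a] a by blast
  have "primeideal (PIdl b) R" using maximalideal_prime[OF irreducible_imp_maximalideal[OF b(1,2)]] .
  moreover have "PIdl b \<noteq> {\<zero>}" using cgenideal_self[OF b(1)] b(2) by (auto simp: ring_irreducible_def)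
  ultimately have "PIdl b = P" using uniq by blast
  moreover have "a \<in> PIdl b" using to_contain_is_to_divide[OF b(1) a(1)] b(3) cgenideal_self[OF a(1)] by blast
  ultimately show ?thesis by simp
qed

lemma total_div:
  assumes nonunit_in: "\<And>a. a \<in> carrier R \<Longrightarrow> a \<notin> Units R \<Longrightarrow> a \<in> P" and PI: "primeideal P R"
  and x: "x \<in> carrier R" and y: "y \<in> carrier R"
  shows "x divides y \<or> y divides x"
proof -
  obtain d where d: "d \<in> carrier R" "PIdl x <+>\<^bsub>R\<^esub> PIdl y = PIdl d"
    using exists_gen[OF add_ideals[OF cgenideal_ideal[OF x] cgenideal_ideal[OF y]]] by blast
  have g: "d gcdof x y" using ideal_sum_iff_gcd[OF x y d(1)] d(2) by simp
  then obtain a b where ab: "a \<in> carrier R" "x = d \<otimes> a" "b \<in> carrier R" "y = d \<otimes> b"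
    unfolding isgcd_def factor_def by blast
  have "d \<in> PIdl x <+>\<^bsub>R\<^esub> PIdl y" using d cgenideal_self[OF d(1)] by simp
  then obtain u v where uv: "u \<in> carrier R" "v \<in> carrier R" "d = u \<otimes> x \<oplus> v \<otimes> y"
    unfolding set_add_def' cgenideal_def by blast
  show ?thesis
  proof (cases "d = \<zero>")
    case True
    then show ?thesis using ab by (simp add: divides_refl)
  next
    case False
    have "d \<otimes> (u \<otimes> a \<oplus> v \<otimes> b) = d \<otimes> (u \<otimes> a) \<oplus> d \<otimes> (v \<otimes> b)"
      using uv ab d(1) by (simp add: r_distr)
    also have "\<dots> = u \<otimes> x \<oplus> v \<otimes> y" using uv(1,2) ab d(1) by (simp add: m_lcomm)
    also have "\<dots> = d \<otimes> \<one>" using uv(3) d(1) by simp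
    finally have "d \<otimes> \<one> = d \<otimes> (u \<otimes> a \<oplus> v \<otimes> b)" by simp
    hence one: "\<one> = u \<otimes> a \<oplus> v \<otimes> b" using m_lcancel[OF False d(1)] uv(1,2) ab(1,3) by simp
    show ?thesis
    proof (cases "a \<in> Units R")
      case True
      have "a \<otimes> (inv a \<otimes> b) = b" using ab True by (simp add: m_assoc[symmetric])
      hence "y = x \<otimes> (inv a \<otimes> b)" using ab True d(1) by (simp add: m_assoc)
      then show ?thesis using True ab by (meson Units_inv_closed dividesI m_closed)
    next
      case F1: False
      show ?thesis
      proof (cases "b \<in> Units R")
        case True
        have "b \<otimes> (inv b \<otimes> a) = a" using ab True by (simp add: m_assoc[symmetric])
        hence "x = y \<otimes> (inv b \<otimes> a)" using ab True d(1) by (simp add: m_assoc)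
        then show ?thesis using True ab by (meson Units_inv_closed dividesI m_closed)
      next
        case False
        have "a \<in> P" "b \<in> P" using nonunit_in F1 False ab by auto
        hence "u \<otimes> a \<oplus> v \<otimes> b \<in> P" using PI uv
          by (meson ideal.I_l_closed ideal.I_r_closed primeideal.axioms(1) additive_subgroup.a_closed ideal.axioms(1))
        hence "\<one> \<in> P" using one by simp
        hence "P = carrier R" using PI by (meson ideal.one_imp_carrier primeideal.axioms(1))
        then show ?thesis using PI primeideal.I_notcarr by blast
      qed
    qed
  qed
qed


lemma inv_main:
  assumes P: "primeideal P R" and uniq: "\<And>Q. primeideal Q R \<Longrightarrow> Q \<noteq> {\<zero>} \<Longrightarrow> Q = P"
    and sub: "subring C R"
    and desc: "\<And>x y z. x \<in> C \<Longrightarrow> y \<in> C \<Longrightarrow> y \<noteq> \<zero> \<Longrightarrow> z \<in> carrier R \<Longrightarrow> x = y \<otimes> z \<Longrightarrow> z \<in> C"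
  shows "(field (R\<lparr>carrier := C\<rparr>) \<or> DVR (R\<lparr>carrier := C\<rparr>)) \<and> noetherian_ring (R\<lparr>carrier := C\<rparr>)"
proof -
  define S where "S = R\<lparr>carrier := C\<rparr>"
  have CS: "carrier S = C" "monoid.mult S = monoid.mult R" "monoid.one S = monoid.one R" "ring.zero S = ring.zero R" "ring.add S = ring.add R"
    by (simp_all add: S_def)
  have Csub: "C \<subseteq> carrier R" using sub by (rule subringE(1))
  have C0: "\<zero> \<in> C" using sub by (rule subringE(2))
  have dom: "domain S" unfolding S_def by (rule subring_is_domain[OF sub])
  interpret S: domain S by (rule dom)
  have nonunit_in: "\<And>a. a \<in> carrier R \<Longrightarrow> a \<notin> Units R \<Longrightarrow> a \<in> P"
    using nonunit_in_P[OF P uniq] by blast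
  have total: "\<And>x y. x \<in> carrier R \<Longrightarrow> y \<in> carrier R \<Longrightarrow> x divides y \<or> y divides x"
    using total_div[OF nonunit_in P] by blast
  have divC: "\<exists>z\<in>C. y = x \<otimes> z" if hx: "x \<in> C" "y \<in> C" "x divides y" for x y
  proof -
    obtain z where z: "z \<in> carrier R" "y = x \<otimes> z" using hx(3) unfolding factor_def by blast
    show ?thesis
    proof (cases "x = \<zero>")
      case True
      then show ?thesis using z C0 by (intro bexI[of _ \<zero>]) auto
    next
      case False
      then show ?thesis using desc[OF hx(2,1) False z] z by blast
    qed
  qed
  have totS: "(\<exists>z\<in>C. y = x \<otimes> z) \<or> (\<exists>z\<in>C. x = y \<otimes> z)" if "x \<in> C" "y \<in> C" for x y
    using total[of x y] that Csub divC by blast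
  have pd: "principal_domain S"
  proof (intro principal_domain.intro dom principal_domain_axioms.intro)
    fix I assume I: "ideal I S"
    have IC: "I \<subseteq> C" using ideal.Icarr[OF I] CS by blast
    have I0: "\<zero> \<in> I" using ideal.axioms(1)[OF I] additive_subgroup.zero_closed CS by metis
    define Ch where "Ch = (\<lambda>x. PIdl x) ` I"
    have chA: "Ch \<subseteq> {J. ideal J R}" unfolding Ch_def using IC Csub cgenideal_ideal by blast
    have chB: "A \<subseteq> B \<or> B \<subseteq> A" if hAB: "A \<in> Ch" "B \<in> Ch" for A B
    proof -
      obtain x y where "x \<in> I" "y \<in> I" "A = PIdl x" "B = PIdl y" using hAB Ch_def by blast
      thus ?thesis
        using total[of x y] to_contain_is_to_divide[of x y] to_contain_is_to_divide[of y x] IC Csub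
        by blast
    qed
    have "subset.chain {J. ideal J R} Ch"
      unfolding pred_on.chain_def using chA chB by blast
    moreover have "Ch \<noteq> {}" using I0 Ch_def by blast
    ultimately have "\<Union>Ch \<in> Ch" using ideal_chain_is_trivial by blast
    then obtain x0 where x0: "x0 \<in> I" "\<Union>Ch = PIdl x0" unfolding Ch_def by blast
    have x0C: "x0 \<in> C" using x0 IC by blast
    have "I = PIdl\<^bsub>S\<^esub> x0"
    proof
      show "I \<subseteq> PIdl\<^bsub>S\<^esub> x0"
      proof
        fix y assume y: "y \<in> I"
        have "PIdl y \<subseteq> PIdl x0" using x0(2) y Ch_def by blast
        hence "x0 divides y" using to_contain_is_to_divide[of x0 y] y x0C IC Csub by blast
        then obtain z where "z \<in> C" "y = x0 \<otimes> z" using divC[of x0 y] x0C y IC by blast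
        thus "y \<in> PIdl\<^bsub>S\<^esub> x0" unfolding cgenideal_def CS using m_comm x0C Csub by blast
      qed
    next
      show "PIdl\<^bsub>S\<^esub> x0 \<subseteq> I"
        unfolding cgenideal_def using ideal.I_l_closed[OF I] x0(1) CS by auto
    qed
    thus "\<exists>a\<in>carrier S. I = PIdl\<^bsub>S\<^esub> a" using x0C CS by blast
  qed
  interpret S: principal_domain S by (rule pd)
  have noeth: "noetherian_ring S" by (rule S.noetherian_ring_axioms)
  have "field S \<or> DVR S"
  proof (cases "\<forall>x\<in>C - {\<zero>}. x \<in> Units S")
    case True
    have "field S"
      by (rule S.field_intro2) (use True CS in auto)
    thus ?thesis ..
  next
    case False
    then obtain t where t: "t \<in> C" "t \<noteq> \<zero>" "t \<notin> Units S" by blast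
    obtain b where b: "b \<in> carrier S" "ring_irreducible\<^bsub>S\<^esub> b" "b divides\<^bsub>S\<^esub> t"
    proof -
      have "t \<in> carrier S - {\<zero>\<^bsub>S\<^esub>}" using t CS by simp
      thus ?thesis using S.exists_irreducible_divisor[of t] t(3) that by blast
    qed
    have pb: "primeideal (PIdl\<^bsub>S\<^esub> b) S"
      using S.maximalideal_prime[OF S.irreducible_imp_maximalideal[OF b(1,2)]] .
    have nb: "PIdl\<^bsub>S\<^esub> b \<noteq> {\<zero>\<^bsub>S\<^esub>}"
      using S.cgenideal_self[OF b(1)] b(2) by (auto simp: ring_irreducible_def)
    have incl: "Q1 \<subseteq> Q2" if Q1: "primeideal Q1 S" "Q1 \<noteq> {\<zero>\<^bsub>S\<^esub>}"
      and Q2: "primeideal Q2 S" "Q2 \<noteq> {\<zero>\<^bsub>S\<^esub>}" for Q1 Q2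
    proof
      fix m assume m: "m \<in> Q1"
      obtain q where q: "q \<in> C" "Q2 = PIdl\<^bsub>S\<^esub> q"
        using S.exists_gen[OF primeideal.axioms(1)[OF Q2(1)]] CS by auto
      have mC: "m \<in> C" using ideal.Icarr[OF primeideal.axioms(1)[OF Q1(1)]] m CS by auto
      have "q \<noteq> \<zero>"
      proof
        assume "q = \<zero>"
        hence "Q2 \<subseteq> {\<zero>}" using q(2) unfolding cgenideal_def CS using Csub by auto
        moreover have "\<zero> \<in> Q2"
          using primeideal.axioms(1)[OF Q2(1)] additive_subgroup.zero_closed ideal.axioms(1) CS by metis
        ultimately show False using Q2(2) CS by auto
      qed
      have mnu: "\<not> (\<exists>w\<in>C. m \<otimes> w = \<one>)"
      proof
        assume "\<exists>w\<in>C. m \<otimes> w = \<one>"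
        then obtain w where w: "w \<in> C" "m \<otimes> w = \<one>" by blast
        have "m \<otimes>\<^bsub>S\<^esub> w \<in> Q1" using ideal.I_r_closed[OF primeideal.axioms(1)[OF Q1(1)] m, of w] w(1) CS(1) by blast
        hence "m \<otimes> w \<in> Q1" using CS(2) by simp
        hence "\<one>\<^bsub>S\<^esub> \<in> Q1" using w CS by simp
        hence "Q1 = carrier S" using ideal.one_imp_carrier[OF primeideal.axioms(1)[OF Q1(1)]] by blast
        thus False using primeideal.I_notcarr[OF Q1(1)] by simp
      qed
      from totS[OF mC q(1)] show "m \<in> Q2"
      proof
        assume "\<exists>z\<in>C. q = m \<otimes> z"
        then obtain z where z: "z \<in> C" "q = m \<otimes> z" by blast
        have "m \<otimes>\<^bsub>S\<^esub> z \<in> Q2" using q z S.cgenideal_self[of q] CS by simp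
        hence "m \<in> Q2 \<or> z \<in> Q2" using primeideal.I_prime[OF Q2(1)] mC z CS by simp
        thus "m \<in> Q2"
        proof
          assume "z \<in> Q2"
          then obtain w where w: "w \<in> C" "z = w \<otimes> q" using q(2) unfolding cgenideal_def CS by auto
          have wc: "w \<in> carrier R" "q \<in> carrier R" "m \<in> carrier R" using w(1) q(1) mC Csub by auto
          have "q \<otimes> (m \<otimes> w) = m \<otimes> (w \<otimes> q)" using wc by (metis m_lcomm m_comm)
          also have "\<dots> = q" by (simp only: w(2)[symmetric] z(2)[symmetric])
          finally have "q \<otimes> \<one> = q \<otimes> (m \<otimes> w)" using wc by simp
          hence "\<one> = m \<otimes> w" using m_lcancel[OF \<open>q \<noteq> \<zero>\<close> wc(2) one_closed m_closed[OF wc(3,1)]] by simp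
          thus "m \<in> Q2" using mnu w by auto
        qed
      next
        assume "\<exists>z\<in>C. m = q \<otimes> z"
        then obtain z where z: "z \<in> C" "m = q \<otimes> z" by blast
        thus "m \<in> Q2" unfolding q(2) cgenideal_def CS using m_comm q(1) Csub by blast
      qed
    qed
    have "\<exists>!Q. primeideal Q S \<and> Q \<noteq> {\<zero>\<^bsub>S\<^esub>}"
      using pb nb incl by (metis subset_antisym)
    thus ?thesis unfolding DVR_def using pd by blast
  qed
  thus ?thesis using noeth S_def by simp
qed

end

context principal_domain
begin
lemma main_aux:
  fixes G :: "('g, 'c) monoid_scheme" and \<phi> :: "'g \<Rightarrow> 'a \<Rightarrow> 'a"
  assumes ex: "\<exists>!P. primeideal P R \<and> P \<noteq> {\<zero>}"
    and iso: "\<forall>g \<in> carrier G. \<phi> g \<in> ring_iso R R"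
  shows "(field (invariant_ring G R \<phi>) \<or> DVR (invariant_ring G R \<phi>))
         \<and> noetherian_ring (invariant_ring G R \<phi>)"
proof -
  obtain P where P0: "primeideal P R \<and> P \<noteq> {\<zero>}" and uniq0: "\<forall>Q. primeideal Q R \<and> Q \<noteq> {\<zero>} \<longrightarrow> Q = P"
    using ex1E[OF ex] by blast
  have P: "primeideal P R" using P0 by blast
  have uniq: "\<And>Q. primeideal Q R \<Longrightarrow> Q \<noteq> {\<zero>} \<Longrightarrow> Q = P" using uniq0 by blast
  define C where "C = {r \<in> carrier R. \<forall>g\<in>carrier G. \<phi> g r = r}"
  have hom: "\<phi> g \<in> ring_hom R R" if "g \<in> carrier G" for g
    using iso that unfolding ring_iso_def by blast
  have hc: "ring_hom_cring R R (\<phi> g)" if "g \<in> carrier G" for g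
    using hom[OF that] is_cring by (simp add: ring_hom_cring_def ring_hom_cring_axioms_def)
  have sub: "subring C R"
  proof (rule subringI)
    show "C \<subseteq> carrier R" by (auto simp: C_def)
    show "\<one> \<in> C" unfolding C_def using ring_hom_one[OF hom] by simp
  next
    fix h assume h: "h \<in> C"
    show "\<ominus> h \<in> C" using h unfolding C_def using ring_hom_cring.hom_a_inv[OF hc] by simp
  next
    fix h1 h2 assume "h1 \<in> C" "h2 \<in> C"
    thus "h1 \<otimes> h2 \<in> C" by (auto simp: C_def ring_hom_mult[OF hom])
  next
    fix h1 h2 assume "h1 \<in> C" "h2 \<in> C"
    thus "h1 \<oplus> h2 \<in> C" by (auto simp: C_def ring_hom_add[OF hom])
  qed
  have desc: "z \<in> C" if xy: "x \<in> C" "y \<in> C" "y \<noteq> \<zero>" "z \<in> carrier R" "x = y \<otimes> z" for x y z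
  proof -
    have "\<phi> g z = z" if g: "g \<in> carrier G" for g
    proof -
      have yc: "y \<in> carrier R" "\<phi> g z \<in> carrier R" using xy(2) ring_hom_closed[OF hom[OF g] xy(4)] unfolding C_def by auto
      have "\<phi> g x = \<phi> g y \<otimes> \<phi> g z" using ring_hom_mult[OF hom[OF g] yc(1) xy(4)] xy(5) by simp
      moreover have "\<phi> g x = x" "\<phi> g y = y" using xy(1,2) g unfolding C_def by auto
      ultimately have "y \<otimes> z = y \<otimes> \<phi> g z" using xy(5) by simp
      thus ?thesis using m_lcancel[OF xy(3) yc(1) xy(4) yc(2)] by simp
    qed
    thus ?thesis using xy(4) unfolding C_def by blast
  qed
  have eq: "invariant_ring G R \<phi> = R\<lparr>carrier := C\<rparr>" by (simp add: invariant_ring_def C_def)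
  have "(field (R\<lparr>carrier := C\<rparr>) \<or> DVR (R\<lparr>carrier := C\<rparr>)) \<and> noetherian_ring (R\<lparr>carrier := C\<rparr>)"
    proof (rule inv_main[where P=P and C=C])
      show "primeideal P R" by (rule P)
      show "\<And>Q. primeideal Q R \<Longrightarrow> Q \<noteq> {\<zero>} \<Longrightarrow> Q = P" by (rule uniq)
      show "subring C R" by (rule sub)
      show "\<And>x y z. x \<in> C \<Longrightarrow> y \<in> C \<Longrightarrow> y \<noteq> \<zero> \<Longrightarrow> z \<in> carrier R \<Longrightarrow> x = y \<otimes> z \<Longrightarrow> z \<in> C"
        by (rule desc)
    qed
  thus ?thesis unfolding eq .
qed

end

theorem mainTheorem5:
  fixes R :: "('a, 'b) ring_scheme" and G :: "('g, 'c) monoid_scheme"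
    and \<phi> :: "'g \<Rightarrow> 'a \<Rightarrow> 'a"
  assumes "DVR R"
    and "group G"
    and "group_action G (carrier R) \<phi>"
    and "\<forall>g \<in> carrier G. \<phi> g \<in> ring_iso R R"
  shows "(field (invariant_ring G R \<phi>) \<or> DVR (invariant_ring G R \<phi>))
         \<and> noetherian_ring (invariant_ring G R \<phi>)"
proof -
  have pd: "principal_domain R" using assms(1) unfolding DVR_def by (rule conjunct1)
  have ex: "\<exists>!P. primeideal P R \<and> P \<noteq> {\<zero>\<^bsub>R\<^esub>}" using assms(1) unfolding DVR_def by (rule conjunct2)
  show ?thesis by (rule principal_domain.main_aux[OF pd ex assms(4)])
qed

end
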